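(* Let $G$ be a finite simple connected nonbipartite graph with edge ideal $I(G)\subseteq S=K[x_1,\ldots,x_n]$. Then $$\mathrm{dstab}(I(G))\le\min\{d_H : H \text{ is a spanning unicyclic nonbipartite subgraph of } G\}.$$
   Context: $K$ is a field and the vertices of $G$ are the variables $x_1,\ldots,x_n$; $I(G)$ is generated by the monomials $x_ix_j$ with $\{x_i,x_j\}\in E(G)$. For an ideal $I\subseteq S$, $\mathrm{dstab}(I)=\min\{t\ge0:\mathrm{depth}(I^t)=\mathrm{depth}(I^{t+i})\text{ for all }i\ge0\}$. A spanning subgraph of $G$ is a connected subgraph with the same vertex set as $G$; a spanning unicyclic nonbipartite subgraph is a spanning subgraph containing exactly one cycle, which has odd length. For such $H$ with unique cycle of length $2k+1$, let $E^*(H)$ be the set of edges of $H$ not on that cycle that are not leaves of $H$ (an edge $y_1y_2$ is a leaf of $H$ if $y_1$ or $y_2$ is adjacent to exactly one vertex in $H$), and set $d_H=|E^*(H)|+k+1$. *)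

theory Defs
  imports "HOL-Library.Poly_Mapping"
begin

text \<open>Polynomials in variables indexed by nat, coefficients in a field 'k:
  a finitely supported map from monomials (exponent vectors) to coefficients.\<close>
type_synonym 'k mpoly = "(nat \<Rightarrow>\<^sub>0 nat) \<Rightarrow>\<^sub>0 'k"

definition polyring :: "nat \<Rightarrow> ('k::field) mpoly set" where
  "polyring n = {p. \<forall>m \<in> Poly_Mapping.keys p. Poly_Mapping.keys m \<subseteq> {1..n}}"

definition Var :: "nat \<Rightarrow> ('k::field) mpoly" where
  "Var i = Poly_Mapping.single (Poly_Mapping.single i 1) 1"

definition ideal_gen :: "nat \<Rightarrow> ('k::field) mpoly set \<Rightarrow> 'k mpoly set" where
  "ideal_gen n A = {(\<Sum>a\<in>B. c a * a) | B c. finite B \<and> B \<subseteq> A \<and> (\<forall>a\<in>B. c a \<in> polyring n)}"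

fun ideal_pow :: "nat \<Rightarrow> ('k::field) mpoly set \<Rightarrow> nat \<Rightarrow> 'k mpoly set" where
  "ideal_pow n I 0 = polyring n"
| "ideal_pow n I (Suc t) = ideal_gen n {a * b | a b. a \<in> ideal_pow n I t \<and> b \<in> I}"

definition seq_mult :: "nat \<Rightarrow> ('k::field) mpoly list \<Rightarrow> 'k mpoly set \<Rightarrow> 'k mpoly set" where
  "seq_mult n fs M = ideal_gen n {f * m | f m. f \<in> set fs \<and> m \<in> M}"

definition max_ideal :: "nat \<Rightarrow> ('k::field) mpoly set" where
  "max_ideal n = ideal_gen n (Var ` {1..n})"

definition regular_seq :: "nat \<Rightarrow> ('k::field) mpoly set \<Rightarrow> 'k mpoly list \<Rightarrow> bool" where
  "regular_seq n M fs \<longleftrightarrow>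
     set fs \<subseteq> max_ideal n \<and>
     (\<forall>i < length fs. \<forall>u \<in> M. fs ! i * u \<in> seq_mult n (take i fs) M \<longrightarrow> u \<in> seq_mult n (take i fs) M) \<and>
     M \<noteq> seq_mult n fs M"

definition depth :: "nat \<Rightarrow> ('k::field) mpoly set \<Rightarrow> nat" where
  "depth n M = Sup {length fs | fs. regular_seq n M fs}"

definition dstab :: "nat \<Rightarrow> ('k::field) mpoly set \<Rightarrow> nat" where
  "dstab n I = (LEAST t. \<forall>i. depth n (ideal_pow n I t) = depth n (ideal_pow n I (t + i)))"

definition simple_graph :: "nat \<Rightarrow> nat set set \<Rightarrow> bool" where
  "simple_graph n E \<longleftrightarrow> (\<forall>e \<in> E. e \<subseteq> {1..n} \<and> card e = 2)"

definition adj :: "nat set set \<Rightarrow> nat \<Rightarrow> nat \<Rightarrow> bool" where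
  "adj E u v \<longleftrightarrow> {u, v} \<in> E \<and> u \<noteq> v"

definition connected_graph :: "nat \<Rightarrow> nat set set \<Rightarrow> bool" where
  "connected_graph n E \<longleftrightarrow> (\<forall>u \<in> {1..n}. \<forall>v \<in> {1..n}. (adj E)\<^sup>*\<^sup>* u v)"

definition bipartite :: "nat \<Rightarrow> nat set set \<Rightarrow> bool" where
  "bipartite n E \<longleftrightarrow> (\<exists>c :: nat \<Rightarrow> bool. \<forall>u v. adj E u v \<longrightarrow> c u \<noteq> c v)"

definition edge_ideal :: "nat \<Rightarrow> nat set set \<Rightarrow> ('k::field) mpoly set" where
  "edge_ideal n E = ideal_gen n {Var i * Var j | i j. {i, j} \<in> E \<and> i \<noteq> j}"

definition is_cycle_in :: "nat set set \<Rightarrow> nat set set \<Rightarrow> bool" where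
  "is_cycle_in H C \<longleftrightarrow> (\<exists>vs. distinct vs \<and> length vs \<ge> 3 \<and>
      C = {{vs ! i, vs ! ((i + 1) mod length vs)} | i. i < length vs} \<and> C \<subseteq> H)"

definition spanning_unicyclic_nonbip :: "nat \<Rightarrow> nat set set \<Rightarrow> nat set set \<Rightarrow> nat set set \<Rightarrow> bool" where
  "spanning_unicyclic_nonbip n E H C \<longleftrightarrow>
     H \<subseteq> E \<and> connected_graph n H \<and> is_cycle_in H C \<and>
     (\<forall>C'. is_cycle_in H C' \<longrightarrow> C' = C) \<and> odd (card C)"

definition degree :: "nat set set \<Rightarrow> nat \<Rightarrow> nat" where
  "degree H y = card {z. adj H y z}"

definition leaf_edge :: "nat set set \<Rightarrow> nat set \<Rightarrow> bool" where
  "leaf_edge H e \<longleftrightarrow> (\<exists>y \<in> e. degree H y = 1)"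

definition Estar :: "nat set set \<Rightarrow> nat set set \<Rightarrow> nat set set" where
  "Estar H C = {e \<in> H. e \<notin> C \<and> \<not> leaf_edge H e}"

text \<open>d_H = |E*(H)| + k + 1 where the cycle has length 2k+1.\<close>
definition dH :: "nat set set \<Rightarrow> nat set set \<Rightarrow> nat" where
  "dH H C = card (Estar H C) + (card C - 1) div 2 + 1"

end

theory Submission
  imports Defs
begin


definition mdeg :: "(nat \<Rightarrow>\<^sub>0 nat) \<Rightarrow> nat" where
  "mdeg m = (\<Sum>k\<in>Poly_Mapping.keys m. Poly_Mapping.lookup m k)"

lemma mdeg_add: "mdeg (a + b) = mdeg a + mdeg b"
  unfolding mdeg_def by (rule setsum_keys_plus_distrib) auto

lemma mdeg_single[simp]: "mdeg (Poly_Mapping.single i k) = k"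
  by (simp add: mdeg_def)

lemma mdeg_zero[simp]: "mdeg 0 = 0"
  by (simp add: mdeg_def)

definition mono1 :: "(nat \<Rightarrow>\<^sub>0 nat) \<Rightarrow> ('k::field) mpoly" where
  "mono1 m = Poly_Mapping.single m 1"

lemma keys_mono1[simp]: "Poly_Mapping.keys (mono1 m :: ('k::field) mpoly) = {m}"
  by (simp add: mono1_def)

lemma mono1_mult: "(mono1 a :: ('k::field) mpoly) * mono1 b = mono1 (a + b)"
  by (simp add: mono1_def mult_single)

lemma Var_mono1: "Var i = mono1 (Poly_Mapping.single i 1)"
  by (simp add: Var_def mono1_def)

lemma keys_add_nat: "Poly_Mapping.keys (a + b :: nat \<Rightarrow>\<^sub>0 nat) = Poly_Mapping.keys a \<union> Poly_Mapping.keys b"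
  by (auto simp: in_keys_iff lookup_add)

lemma polyring_0[simp]: "0 \<in> polyring n"
  by (simp add: polyring_def)

lemma polyring_add: "p \<in> polyring n \<Longrightarrow> q \<in> polyring n \<Longrightarrow> p + q \<in> polyring n"
  unfolding polyring_def using keys_add[of p q] by blast

lemma polyring_mult: "p \<in> polyring n \<Longrightarrow> q \<in> polyring n \<Longrightarrow> p * q \<in> polyring n"
  unfolding polyring_def using keys_mult[of p q] by (fastforce simp: keys_add_nat)

lemma polyring_mono1: "Poly_Mapping.keys m \<subseteq> {1..n} \<Longrightarrow> mono1 m \<in> polyring n"
  by (simp add: polyring_def)

lemma polyring_1[simp]: "(1::('k::field) mpoly) \<in> polyring n"
  by (simp add: polyring_def)

definition idl :: "nat \<Rightarrow> ('k::field) mpoly set \<Rightarrow> bool" where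
  "idl n M \<longleftrightarrow> 0 \<in> M \<and> (\<forall>x\<in>M. \<forall>y\<in>M. x + y \<in> M) \<and> (\<forall>c\<in>polyring n. \<forall>x\<in>M. c * x \<in> M)"

lemma idl_sum:
  assumes "idl n M" "finite B" "\<And>a. a \<in> B \<Longrightarrow> f a \<in> M" shows "sum f B \<in> M"
  using assms(2,3) by (induction B rule: finite_induct) (use assms(1) in \<open>auto simp: idl_def\<close>)

lemma idl_polyring: "idl n (polyring n)"
  by (auto simp: idl_def polyring_add polyring_mult)

lemma gen_in: "a \<in> A \<Longrightarrow> a \<in> ideal_gen n A"
  unfolding ideal_gen_def
  by (rule CollectI, rule exI[of _ "{a}"], rule exI[of _ "\<lambda>_. 1"]) simp

lemma ideal_gen_least: "idl n M \<Longrightarrow> A \<subseteq> M \<Longrightarrow> ideal_gen n A \<subseteq> M"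
  unfolding ideal_gen_def
proof clarify
  fix B and c :: "('a::field) mpoly \<Rightarrow> 'a mpoly" assume M: "idl n M" and AM: "A \<subseteq> M" and B: "finite B" "B \<subseteq> A" "\<forall>a\<in>B. c a \<in> polyring n"
  show "(\<Sum>a\<in>B. c a * a) \<in> M"
    by (rule idl_sum[OF M B(1)]) (use M AM B in \<open>auto simp: idl_def\<close>)
qed

lemma idl_ideal_gen: "idl n (ideal_gen n A)"
  unfolding idl_def
proof (intro conjI ballI)
  show "0 \<in> ideal_gen n A" unfolding ideal_gen_def
    by (rule CollectI, rule exI[of _ "{}"]) simp
next
  fix x y assume "x \<in> ideal_gen n A" "y \<in> ideal_gen n A"
  then obtain B1 c1 B2 c2 where x: "x = (\<Sum>a\<in>B1. c1 a * a)" "finite B1" "B1 \<subseteq> A" "\<forall>a\<in>B1. c1 a \<in> polyring n"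
    and y: "y = (\<Sum>a\<in>B2. c2 a * a)" "finite B2" "B2 \<subseteq> A" "\<forall>a\<in>B2. c2 a \<in> polyring n"
    unfolding ideal_gen_def by blast
  define c where "c a = (if a \<in> B1 then c1 a else 0) + (if a \<in> B2 then c2 a else 0)" for a
  have "x = (\<Sum>a\<in>B1 \<union> B2. (if a \<in> B1 then c1 a else 0) * a)"
    unfolding x(1) by (rule sum.mono_neutral_cong_left) (use x y in auto)
  moreover have "y = (\<Sum>a\<in>B1 \<union> B2. (if a \<in> B2 then c2 a else 0) * a)"
    unfolding y(1) by (rule sum.mono_neutral_cong_left) (use x y in auto)
  ultimately have "x + y = (\<Sum>a\<in>B1 \<union> B2. c a * a)"
    by (simp add: c_def distrib_right sum.distrib)
  moreover have "\<forall>a\<in>B1 \<union> B2. c a \<in> polyring n"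
    using x y by (auto simp: c_def intro!: polyring_add)
  ultimately show "x + y \<in> ideal_gen n A"
    unfolding ideal_gen_def using x y by blast
next
  fix d x :: "('a::field) mpoly" assume d: "d \<in> polyring n" and "x \<in> ideal_gen n A"
  then obtain B c where x: "x = (\<Sum>a\<in>B. c a * a)" "finite B" "B \<subseteq> A" "\<forall>a\<in>B. c a \<in> polyring n"
    unfolding ideal_gen_def by blast
  have "d * x = (\<Sum>a\<in>B. (d * c a) * a)"
    by (simp add: x(1) sum_distrib_left mult.assoc)
  then show "d * x \<in> ideal_gen n A"
    unfolding ideal_gen_def
    apply (intro CollectI exI[of _ B] exI[of _ "\<lambda>a. d * c a"])
    using x d by (auto intro: polyring_mult)
qed

lemma idl_pow: "idl n (ideal_pow n I t)"
  by (cases t) (simp_all add: idl_polyring idl_ideal_gen)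

lemma pow_Suc_in: "a \<in> ideal_pow n I t \<Longrightarrow> b \<in> I \<Longrightarrow> a * b \<in> ideal_pow n I (Suc t)"
  by (auto intro!: gen_in)


definition degge :: "nat \<Rightarrow> ('k::field) mpoly \<Rightarrow> bool" where
  "degge d p \<longleftrightarrow> (\<forall>m\<in>Poly_Mapping.keys p. d \<le> mdeg m)"

lemma degge_add: "degge d p \<Longrightarrow> degge d q \<Longrightarrow> degge d (p + q)"
  unfolding degge_def using keys_add[of p q] by blast

lemma degge_mult: "degge a p \<Longrightarrow> degge b q \<Longrightarrow> degge (a + b) (p * q)"
  unfolding degge_def using keys_mult[of p q] by (fastforce simp: mdeg_add intro: add_mono)

lemma idl_degge: "idl n {p. degge d p}"
  unfolding idl_def
proof (intro conjI ballI)
  fix c x :: "('a::field) mpoly" assume "x \<in> {p. degge d p}"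
  then have "degge (0 + d) (c * x)" by (intro degge_mult) (auto simp: degge_def)
  then show "c * x \<in> {p. degge d p}" by simp
next
  fix x y :: "('a::field) mpoly" assume "x \<in> {p. degge d p}" "y \<in> {p. degge d p}"
  then show "x + y \<in> {p. degge d p}" by (auto intro: degge_add)
qed (auto simp: degge_def)

lemma pow_degge:
  fixes p :: "('k::field) mpoly"
  shows "p \<in> ideal_pow n (edge_ideal n E) t \<Longrightarrow> degge (2 * t) p"
proof (induction t arbitrary: p)
  case 0
  then show ?case by (simp add: degge_def)
next
  case (Suc t)
  have E: "(edge_ideal n E :: 'k mpoly set) \<subseteq> {p. degge 2 p}"
    unfolding edge_ideal_def
    by (rule ideal_gen_least[OF idl_degge]) (auto simp: Var_mono1 mono1_mult degge_def mdeg_add)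
  have H: "degge (2 * t + 2) (a * b)"
    if "a \<in> ideal_pow n (edge_ideal n E) t" "b \<in> edge_ideal n E" for a b :: "'k mpoly"
    using that degge_mult[of "2*t" a 2 b] Suc.IH E by auto
  have "ideal_pow n (edge_ideal n E :: 'k mpoly set) (Suc t) \<subseteq> {p. degge (2 * t + 2) p}"
    unfolding ideal_pow.simps
    by (rule ideal_gen_least[OF idl_degge]) (use H in blast)
  then show ?case using Suc.prems by auto
qed

lemma mono1_notin: "mdeg m < 2 * t \<Longrightarrow> (mono1 m :: ('k::field) mpoly) \<notin> ideal_pow n (edge_ideal n E) t"
  using pow_degge[of "mono1 m" n E t] by (auto simp: degge_def)

lemma seq_mult_nil: "seq_mult n [] M = {0}"
  unfolding seq_mult_def ideal_gen_def by auto

lemma seq_mult_single_in: "y \<in> M \<Longrightarrow> f * y \<in> seq_mult n [f] M"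
  unfolding seq_mult_def by (rule gen_in) auto

lemma seq_mult_single_D:
  fixes M :: "('k::field) mpoly set"
  assumes M: "idl n M" and x: "x \<in> seq_mult n [f] M"
  shows "\<exists>y\<in>M. x = f * y"
proof -
  have "idl n {f * y | y. y \<in> M}"
    unfolding idl_def
  proof (intro conjI ballI)
    show "0 \<in> {f * y |y. y \<in> M}" using M by (auto simp: idl_def intro!: exI[of _ 0])
  next
    fix a b assume "a \<in> {f * y |y. y \<in> M}" "b \<in> {f * y |y. y \<in> M}"
    then obtain y1 y2 where "a = f * y1" "b = f * y2" "y1 \<in> M" "y2 \<in> M" by blast
    then show "a + b \<in> {f * y |y. y \<in> M}" using M
      by (auto simp: idl_def distrib_left intro!: exI[of _ "y1 + y2"])
  next
    fix c a :: "'k mpoly" assume c: "c \<in> polyring n" and "a \<in> {f * y |y. y \<in> M}"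
    then obtain y1 where "a = f * y1" "y1 \<in> M" by blast
    then show "c * a \<in> {f * y |y. y \<in> M}" using M c
      by (auto simp: idl_def mult.left_commute intro!: exI[of _ "c * y1"])
  qed
  then have "seq_mult n [f] M \<subseteq> {f * y | y. y \<in> M}"
    unfolding seq_mult_def by (rule ideal_gen_least) auto
  then show ?thesis using x by auto
qed

lemma max_ideal_mult:
  assumes M: "idl n M" and u: "\<forall>j\<in>{1..n}. Var j * u \<in> M" and f: "f \<in> max_ideal n"
  shows "f * u \<in> M"
proof -
  have "idl n {f. f * u \<in> M}"
    using M by (auto simp: idl_def distrib_right mult.assoc)
  then have "max_ideal n \<subseteq> {f. f * u \<in> M}"
    unfolding max_ideal_def by (rule ideal_gen_least) (use u in auto)
  then show ?thesis using f by auto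
qed

lemma Var_nonzero[simp]: "(Var j :: ('k::field) mpoly) \<noteq> 0"
  by (metis Var_mono1 keys_mono1 empty_not_insert keys_zero)

lemma depth_one:
  fixes M :: "('k::field) mpoly set"
  assumes M: "idl n M" and uM: "u \<notin> M" and u: "\<forall>j\<in>{1..n}. Var j * u \<in> M" and n: "1 \<le> n"
  shows "depth n M = 1"
proof -
  have u0: "u \<noteq> 0" using uM M by (auto simp: idl_def)
  have le1: "length fs \<le> 1" if fs: "regular_seq n M fs" for fs
  proof (rule ccontr)
    assume "\<not> length fs \<le> 1"
    then have len: "0 < length fs" "1 < length fs" by auto
    define f1 where "f1 = fs ! 0"
    define f2 where "f2 = fs ! 1"
    have sfs: "set fs \<subseteq> max_ideal n" using fs unfolding regular_seq_def by blast
    have f1m: "f1 \<in> max_ideal n" and f2m: "f2 \<in> max_ideal n"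
      using sfs nth_mem[OF len(1)] nth_mem[OF len(2)] unfolding f1_def f2_def by auto
    have reg: "\<forall>i < length fs. \<forall>w \<in> M. fs ! i * w \<in> seq_mult n (take i fs) M \<longrightarrow> w \<in> seq_mult n (take i fs) M"
      using fs unfolding regular_seq_def by blast
    have "Var 1 * u \<in> M" using u n by auto
    moreover have "Var 1 * u \<noteq> 0" using u0 by simp
    ultimately have "f1 \<noteq> 0"
      using reg[rule_format, of 0 "Var 1 * u"] len by (auto simp: seq_mult_nil f1_def)
    have t1: "take (Suc 0) fs = [f1]" using len unfolding f1_def by (cases fs) auto
    have w: "f1 * u \<in> M" by (rule max_ideal_mult[OF M u f1m])
    have "f2 * u \<in> M" by (rule max_ideal_mult[OF M u f2m])
    then have "f1 * (f2 * u) \<in> seq_mult n [f1] M" by (rule seq_mult_single_in)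
    then have "f2 * (f1 * u) \<in> seq_mult n (take 1 fs) M" by (simp add: t1 mult.left_commute)
    then have "f1 * u \<in> seq_mult n [f1] M"
      using reg[rule_format, of 1 "f1 * u"] len w by (simp add: f2_def t1)
    then obtain y where "y \<in> M" "f1 * u = f1 * y" using seq_mult_single_D[OF M] by blast
    then show False using \<open>f1 \<noteq> 0\<close> uM by simp
  qed
  have r1: "regular_seq n M [Var 1]"
    unfolding regular_seq_def
  proof (intro conjI)
    show "set [Var 1] \<subseteq> max_ideal n" using n by (auto simp: max_ideal_def intro!: gen_in)
    show "\<forall>i<length [Var 1]. \<forall>w\<in>M. [Var 1] ! i * w \<in> seq_mult n (take i [Var 1]) M \<longrightarrow>
          w \<in> seq_mult n (take i [Var 1]) M"
      by (auto simp: seq_mult_nil)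
    show "M \<noteq> seq_mult n [Var 1] M"
    proof
      assume eq: "M = seq_mult n [Var 1] M"
      have "Var 1 * u \<in> M" using u n by auto
      then obtain y where "y \<in> M" "Var 1 * u = Var 1 * y" using seq_mult_single_D[OF M] eq by blast
      then show False using uM by simp
    qed
  qed
  show ?thesis
    unfolding depth_def
    by (rule cSup_eq_maximum) (use le1 r1 in \<open>auto intro!: exI[of _ "[Var 1]"]\<close>)
qed



section \<open>Exponent vectors and edge sums\<close>

abbreviation sg :: "nat \<Rightarrow> (nat \<Rightarrow>\<^sub>0 nat)" where
  "sg x \<equiv> Poly_Mapping.single x 1"

definition evec :: "nat set \<Rightarrow> (nat \<Rightarrow>\<^sub>0 nat)" where
  "evec e = (\<Sum>x\<in>e. sg x)"

lemma mdeg_sum: "mdeg (sum f A) = (\<Sum>a\<in>A. mdeg (f a))"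
  by (induction A rule: infinite_finite_induct) (auto simp: mdeg_add)

lemma keys_sum_nat: "finite A \<Longrightarrow> Poly_Mapping.keys (sum f A :: nat \<Rightarrow>\<^sub>0 nat) = (\<Union>a\<in>A. Poly_Mapping.keys (f a))"
  by (induction A rule: finite_induct) (auto simp: keys_add_nat)

lemma mdeg_evec: "finite e \<Longrightarrow> mdeg (evec e) = card e"
  by (simp add: evec_def mdeg_sum)

lemma keys_evec: "finite e \<Longrightarrow> Poly_Mapping.keys (evec e) = e"
  by (simp add: evec_def keys_sum_nat)

lemma evec_pair: "a \<noteq> b \<Longrightarrow> evec {a, b} = sg a + sg b"
  by (simp add: evec_def)

inductive esum :: "nat set set \<Rightarrow> nat \<Rightarrow> (nat \<Rightarrow>\<^sub>0 nat) \<Rightarrow> bool" for E where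
  esum0: "esum E 0 0"
| esumS: "esum E t s \<Longrightarrow> {a, b} \<in> E \<Longrightarrow> a \<noteq> b \<Longrightarrow> esum E (Suc t) (s + sg a + sg b)"

lemma esum_add: "esum E t2 s2 \<Longrightarrow> esum E t1 s1 \<Longrightarrow> esum E (t1 + t2) (s1 + s2)"
proof (induction rule: esum.induct)
  case esum0
  then show ?case by simp
next
  case (esumS t s a b)
  then have "esum E (Suc (t1 + t)) (s1 + s + sg a + sg b)" by (intro esum.esumS) auto
  then show ?case by (simp add: add.assoc)
qed

lemma esum_edge: "{a, b} \<in> E \<Longrightarrow> a \<noteq> b \<Longrightarrow> esum E 1 (sg a + sg b)"
  using esum.esumS[OF esum.esum0, of a b E] by simp

lemma esum_evec: assumes "e \<in> E" "card e = 2" shows "esum E 1 (evec e)"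
proof -
  obtain x y where "e = {x, y}" "x \<noteq> y" using assms(2) by (auto simp: card_2_iff)
  then show ?thesis using esum_edge[of x y E] assms(1) by (simp add: evec_pair)
qed

lemma esum_sum: "finite A \<Longrightarrow> (\<And>a. a \<in> A \<Longrightarrow> esum E 1 (f a)) \<Longrightarrow> esum E (card A) (sum f A)"
proof (induction A rule: finite_induct)
  case empty
  then show ?case by (simp add: esum.esum0)
next
  case (insert x F)
  then show ?case using esum_add[of E 1 "f x" "card F" "sum f F"] by (simp add: add.commute)
qed

lemma esum_rep: "esum E 1 f \<Longrightarrow> esum E s (\<Sum>i<s. f)"
proof (induction s)
  case 0
  then show ?case by (simp add: esum.esum0)
next
  case (Suc s)
  have "esum E (s + 1) ((\<Sum>i<s. f) + f)" by (rule esum_add[OF Suc.prems Suc.IH[OF Suc.prems]])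
  then show ?case by (simp only: sum.lessThan_Suc flip: Suc_eq_plus1)
qed

definition lev :: "nat set set \<Rightarrow> nat \<Rightarrow> (nat \<Rightarrow>\<^sub>0 nat) \<Rightarrow> bool" where
  "lev E t m \<longleftrightarrow> (\<exists>s r. esum E t s \<and> m = s + r)"

lemma lev_esum: "esum E t s \<Longrightarrow> lev E t s"
  unfolding lev_def by (rule exI[of _ s], rule exI[of _ 0]) simp

lemma lev_add: "lev E t1 m1 \<Longrightarrow> lev E t2 m2 \<Longrightarrow> lev E (t1 + t2) (m1 + m2)"
  unfolding lev_def
proof clarify
  fix s r s' r' assume "esum E t1 s" "esum E t2 s'"
  then have "esum E (t1 + t2) (s + s')" by (rule esum_add[rotated])
  then show "\<exists>sa ra. esum E (t1 + t2) sa \<and> s + r + (s' + r') = sa + ra"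
    by (intro exI[of _ "s + s'"] exI[of _ "r + r'"]) (simp add: add_ac)
qed

lemma lev_in_pow_aux:
  "esum E t s \<Longrightarrow> Poly_Mapping.keys (s + r) \<subseteq> {1..n} \<Longrightarrow>
    (mono1 (s + r) :: ('k::field) mpoly) \<in> ideal_pow n (edge_ideal n E) t"
proof (induction arbitrary: r rule: esum.induct)
  case esum0
  then show ?case by (simp add: polyring_mono1)
next
  case (esumS t s a b)
  have k: "Poly_Mapping.keys (s + r) \<subseteq> {1..n}" using esumS.prems by (auto simp: keys_add_nat)
  have eq: "(mono1 (s + sg a + sg b + r) :: 'k mpoly) = mono1 (s + r) * (Var a * Var b)"
    by (simp add: Var_mono1 mono1_mult add_ac)
  have "Var a * Var b \<in> (edge_ideal n E :: 'k mpoly set)"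
    unfolding edge_ideal_def by (rule gen_in) (use esumS.hyps in auto)
  then show ?case unfolding eq using esumS.IH[OF k] by (rule pow_Suc_in[rotated])
qed

lemma lev_in_pow:
  "lev E t m \<Longrightarrow> Poly_Mapping.keys m \<subseteq> {1..n} \<Longrightarrow>
    (mono1 m :: ('k::field) mpoly) \<in> ideal_pow n (edge_ideal n E) t"
  unfolding lev_def using lev_in_pow_aux by blast



section \<open>Walks\<close>

lemma adj_sym: "adj H u v \<Longrightarrow> adj H v u"
  by (auto simp: adj_def insert_commute)

lemma adj_mono: "adj H u v \<Longrightarrow> H \<subseteq> E \<Longrightarrow> adj E u v"
  by (auto simp: adj_def)

fun walkl :: "nat set set \<Rightarrow> nat list \<Rightarrow> bool" where
  "walkl H [] = True"
| "walkl H [x] = True"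
| "walkl H (x # y # r) = (adj H x y \<and> walkl H (y # r))"

lemma walkl_Cons: "walkl H (x # r) \<longleftrightarrow> walkl H r \<and> (r \<noteq> [] \<longrightarrow> adj H x (hd r))"
  by (cases r) auto

lemma walkl_append:
  "walkl H (xs @ ys) \<longleftrightarrow> walkl H xs \<and> walkl H ys \<and> (xs \<noteq> [] \<longrightarrow> ys \<noteq> [] \<longrightarrow> adj H (last xs) (hd ys))"
  by (induction xs) (auto simp: walkl_Cons)

lemma walkl_appendD1: "walkl H (xs @ ys) \<Longrightarrow> walkl H xs"
  by (simp add: walkl_append)

lemma walkl_appendD2: "walkl H (xs @ ys) \<Longrightarrow> walkl H ys"
  by (simp add: walkl_append)

lemma walkl_nth: "walkl H xs \<Longrightarrow> Suc i < length xs \<Longrightarrow> adj H (xs ! i) (xs ! Suc i)"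
proof (induction xs arbitrary: i)
  case Nil
  then show ?case by simp
next
  case (Cons x xs)
  then show ?case by (cases i; cases xs) (auto simp: walkl_Cons)
qed

lemma walkl_rev: "walkl H xs \<Longrightarrow> walkl H (rev xs)"
  by (induction xs) (auto simp: walkl_Cons walkl_append adj_sym hd_rev last_rev)

lemma walkl_mono: "walkl H xs \<Longrightarrow> H \<subseteq> E \<Longrightarrow> walkl E xs"
  by (induction xs) (auto simp: walkl_Cons adj_def)

lemma rtranclp_walk:
  assumes "(adj H)\<^sup>*\<^sup>* u v"
  shows "\<exists>xs. walkl H xs \<and> xs \<noteq> [] \<and> hd xs = u \<and> last xs = v"
  using assms
proof (induction rule: rtranclp_induct)
  case base
  then show ?case by (intro exI[of _ "[u]"]) simp
next
  case (step y z)
  then obtain xs where "walkl H xs" "xs \<noteq> []" "hd xs = u" "last xs = y" by blast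
  with step show ?case by (intro exI[of _ "xs @ [z]"]) (auto simp: walkl_append)
qed

lemma short_path:
  assumes "walkl H p0" "p0 \<noteq> []" "hd p0 = j" "last p0 \<in> T"
  shows "\<exists>p. walkl H p \<and> p \<noteq> [] \<and> hd p = j \<and> last p \<in> T \<and> distinct p \<and>
             (\<forall>a < length p - 1. p ! a \<notin> T)"
proof -
  define P where "P p \<longleftrightarrow> walkl H p \<and> p \<noteq> [] \<and> hd p = j \<and> last p \<in> T" for p
  have "P p0" using assms by (simp add: P_def)
  then obtain p where Pp: "P p" and minp: "\<And>p'. P p' \<Longrightarrow> length p \<le> length p'"
    using ex_has_least_nat[of P p0 length] by blast
  have dist: "distinct p"
  proof (rule ccontr)
    assume "\<not> distinct p"
    then obtain xs y ys zs where p: "p = xs @ [y] @ ys @ [y] @ zs"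
      using not_distinct_decomp by blast
    have wp: "walkl H ((xs @ [y]) @ (ys @ ([y] @ zs)))" using Pp unfolding P_def p by simp
    have w1: "walkl H (xs @ [y])" and w3: "walkl H (ys @ ([y] @ zs))"
      using walkl_appendD1[OF wp] walkl_appendD2[OF wp] by auto
    have w2: "walkl H ([y] @ zs)" using walkl_appendD2[OF w3] .
    have "walkl H (xs @ ([y] @ zs))"
      using w1 w2 unfolding walkl_append[of H xs "[y] @ zs"] by (simp add: walkl_append)
    moreover have "hd (xs @ [y] @ zs) = j" using Pp unfolding P_def p by (cases xs) auto
    moreover have "last (xs @ [y] @ zs) \<in> T" using Pp unfolding P_def p by (cases zs) auto
    ultimately have "P (xs @ [y] @ zs)" unfolding P_def by simp
    then show False using minp[of "xs @ [y] @ zs"] p by simp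
  qed
  have noT: "\<forall>a < length p - 1. p ! a \<notin> T"
  proof (intro allI impI notI)
    fix a assume a: "a < length p - 1" and pa: "p ! a \<in> T"
    have "p = take (Suc a) p @ drop (Suc a) p" by simp
    then have "walkl H (take (Suc a) p)" using Pp unfolding P_def by (metis walkl_append)
    moreover have "last (take (Suc a) p) = p ! a" using a by (simp add: take_Suc_conv_app_nth)
    moreover have "hd (take (Suc a) p) = j" using Pp a unfolding P_def by (cases p) auto
    ultimately have "P (take (Suc a) p)" using pa a unfolding P_def by auto
    then show False using minp a by fastforce
  qed
  show ?thesis using Pp dist noT unfolding P_def by blast
qed

section \<open>Cycles\<close>

lemma mod_lt: "i < (L::nat) \<Longrightarrow> j mod L < L"
  by simp

lemma mod_lt3: "3 \<le> (L::nat) \<Longrightarrow> j mod L < L"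
  by simp

definition cedges :: "nat list \<Rightarrow> nat set set" where
  "cedges vs = {{vs ! i, vs ! ((i + 1) mod length vs)} | i. i < length vs}"

lemma cedges_image: "cedges vs = (\<lambda>i. {vs ! i, vs ! ((i + 1) mod length vs)}) ` {..<length vs}"
  by (auto simp: cedges_def)

lemma succ_mod: "j < (L::nat) \<Longrightarrow> (j + 1) mod L = (if j + 1 = L then 0 else j + 1)"
  by (cases "j + 1 = L") auto
lemma succ_mod_contra:
  assumes "i < (L::nat)" "j < L" "3 \<le> L" "i = (j + 1) mod L" "j = (i + 1) mod L"
  shows False
proof -
  have a: "i = (if j + 1 = L then 0 else j + 1)" using assms(4) succ_mod[OF assms(2)] by (rule trans)
  have b: "j = (if i + 1 = L then 0 else i + 1)" using assms(5) succ_mod[OF assms(1)] by (rule trans)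
  show False
  proof (cases "j + 1 = L")
    case True
    then have i0: "i = 0" using a by simp
    have "i + 1 \<noteq> L" using i0 assms(3) by linarith
    then have "j = i + 1" using b by simp
    then show False using True i0 assms(3) by linarith
  next
    case False
    then have ij: "i = j + 1" using a by simp
    show False
    proof (cases "i + 1 = L")
      case True
      then have "j = 0" using b by simp
      then show False using ij True assms(3) by linarith
    next
      case False
      then have "j = i + 1" using b by simp
      then show False using ij by linarith
    qed
  qed
qed

lemma card_cedges:
  assumes d: "distinct vs" and L: "3 \<le> length vs"
  shows "card (cedges vs) = length vs"
proof -
  let ?L = "length vs"
  have "inj_on (\<lambda>i. {vs ! i, vs ! ((i + 1) mod ?L)}) {..<?L}"
  proof (rule inj_onI)
    fix i j assume i: "i \<in> {..<?L}" and j: "j \<in> {..<?L}"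
      and eq: "{vs ! i, vs ! ((i + 1) mod ?L)} = {vs ! j, vs ! ((j + 1) mod ?L)}"
    have im: "(i + 1) mod ?L < ?L" and jm: "(j + 1) mod ?L < ?L" using mod_lt3[OF L] by auto
    have iL: "i < ?L" and jL: "j < ?L" using i j by auto
    have "vs ! i = vs ! j \<or> (vs ! i = vs ! ((j + 1) mod ?L) \<and> vs ! ((i + 1) mod ?L) = vs ! j)"
      using eq by (simp only: doubleton_eq_iff) blast
    then show "i = j"
    proof
      assume "vs ! i = vs ! j"
      then show ?thesis using nth_eq_iff_index_eq[OF d iL jL] by blast
    next
      assume 2: "vs ! i = vs ! ((j + 1) mod ?L) \<and> vs ! ((i + 1) mod ?L) = vs ! j"
      then have e1: "i = (j + 1) mod ?L" and e2: "j = (i + 1) mod ?L"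
        using nth_eq_iff_index_eq[OF d iL jm] nth_eq_iff_index_eq[OF d im jL] by auto
      show ?thesis using succ_mod_contra[OF iL jL L e1 e2] ..
    qed
  qed
  then show ?thesis by (simp add: cedges_image card_image)
qed

lemma cedges_sub: "e \<in> cedges vs \<Longrightarrow> e \<subseteq> set vs"
  by (auto simp: cedges_def intro!: nth_mem mod_lt)

lemma cedges_in: "i < length vs \<Longrightarrow> {vs ! i, vs ! ((i + 1) mod length vs)} \<in> cedges vs"
  by (auto simp: cedges_def)

lemma cyc_next_neq:
  assumes "distinct vs" "2 \<le> length vs" "i < length vs"
  shows "vs ! i \<noteq> vs ! ((i + 1) mod length vs)"
proof -
  have "(i + 1) mod length vs \<noteq> i" using assms by (auto simp: mod_if)
  moreover have "(i + 1) mod length vs < length vs" using assms by (simp add: mod_lt)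
  ultimately show ?thesis using assms by (simp add: nth_eq_iff_index_eq)
qed



lemma walkl_from_nth: "(\<And>i. Suc i < length xs \<Longrightarrow> adj H (xs ! i) (xs ! Suc i)) \<Longrightarrow> walkl H xs"
proof (induction xs)
  case Nil
  then show ?case by simp
next
  case (Cons x xs)
  have "walkl H xs" using Cons.prems by (intro Cons.IH) (metis Suc_less_eq length_Cons nth_Cons_Suc)
  moreover have "xs \<noteq> [] \<Longrightarrow> adj H x (hd xs)"
    using Cons.prems[of 0] by (cases xs) auto
  ultimately show ?case by (simp add: walkl_Cons)
qed

lemma cedges_cwalk:
  assumes d: "distinct vs" and L: "3 \<le> length vs" and C: "cedges vs \<subseteq> H"
  shows "walkl H vs" "adj H (last vs) (hd vs)"
proof -
  show "walkl H vs"
  proof (rule walkl_from_nth)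
    fix i assume i: "Suc i < length vs"
    have "{vs ! i, vs ! ((i + 1) mod length vs)} \<in> H" using cedges_in[of i vs] C i by auto
    moreover have "(i + 1) mod length vs = Suc i" using i by simp
    moreover have "vs ! i \<noteq> vs ! Suc i" using d i by (simp add: nth_eq_iff_index_eq)
    ultimately show "adj H (vs ! i) (vs ! Suc i)" by (simp add: adj_def)
  qed
  let ?l = "length vs - 1"
  have l: "?l < length vs" using L by simp
  have "{vs ! ?l, vs ! ((?l + 1) mod length vs)} \<in> H" using cedges_in[OF l] C by auto
  moreover have "?l + 1 = length vs" using L by simp
  then have "(?l + 1) mod length vs = 0" by simp
  moreover have "vs ! ?l \<noteq> vs ! 0" using L nth_eq_iff_index_eq[OF d, of ?l 0] by fastforce
  moreover have ne: "vs \<noteq> []" using L by auto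
  moreover have "last vs = vs ! ?l" "hd vs = vs ! 0"
    using last_conv_nth[OF ne] hd_conv_nth[OF ne] by auto
  ultimately show "adj H (last vs) (hd vs)" by (simp add: adj_def)
qed

lemma cyc_nbr:
  assumes w: "walkl H vs" "adj H (last vs) (hd vs)" and x: "x \<in> set vs"
  shows "\<exists>z\<in>set vs. adj H x z"
proof -
  obtain i where i: "i < length vs" "x = vs ! i" using x by (auto simp: in_set_conv_nth)
  show ?thesis
  proof (cases "Suc i < length vs")
    case True
    then show ?thesis using walkl_nth[OF w(1) True] i by auto
  next
    case False
    then have "i = length vs - 1" using i by simp
    moreover have ne: "vs \<noteq> []" using i by auto
    ultimately have "x = last vs" using i by (simp add: last_conv_nth[OF ne])
    moreover have "hd vs \<in> set vs" using i by (cases vs) auto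
    ultimately show ?thesis using w(2) by auto
  qed
qed

lemma walk_even_esum:
  "walkl E zs \<Longrightarrow> even (length zs) \<Longrightarrow> esum E (length zs div 2) (sum_list (map sg zs))"
proof (induction zs rule: induct_list012)
  case 1
  then show ?case by (simp add: esum.esum0)
next
  case (2 x)
  then show ?case by simp
next
  case (3 x y r)
  then have r: "esum E (length r div 2) (sum_list (map sg r))" by (simp add: walkl_Cons)
  have xy: "{x, y} \<in> E" "x \<noteq> y" using "3.prems" by (auto simp: adj_def)
  have "esum E (Suc (length r div 2)) (sum_list (map sg r) + sg x + sg y)"
    by (rule esum.esumS[OF r xy])
  moreover have "length (x # y # r) div 2 = Suc (length r div 2)" by simp
  ultimately show ?case by (simp add: add_ac)
qed

lemma evec_set_list: "distinct vs \<Longrightarrow> evec (set vs) = sum_list (map sg vs)"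
  by (simp add: evec_def sum.distinct_set_conv_list)

lemma cyc_adj:
  assumes d: "distinct vs" and wv: "walkl E vs" "adj E (last vs) (hd vs)"
    and L: "length vs = 2 * k + 1" and w: "w \<in> set vs" and a: "adj E v w"
  shows "lev E (k + 1) (sg v + evec (set vs))"
proof -
  obtain i where i: "i < length vs" "w = vs ! i" using w by (auto simp: in_set_conv_nth)
  define xs where "xs = take i vs"
  define ys where "ys = drop (Suc i) vs"
  have vs: "vs = xs @ w # ys" unfolding xs_def ys_def i(2) using i(1) by (simp add: id_take_nth_drop)
  have wx: "walkl E xs" and wy: "walkl E ys"
    using wv(1) unfolding vs by (auto simp: walkl_append walkl_Cons)
  have "xs \<noteq> [] \<Longrightarrow> ys \<noteq> [] \<Longrightarrow> adj E (last ys) (hd xs)"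
    using wv(2) unfolding vs by simp
  then have wyx: "walkl E (ys @ xs)" using wx wy by (simp add: walkl_append)
  have len: "length (ys @ xs) = 2 * k" using L unfolding vs by simp
  have ev: "even (length (ys @ xs))" using len by simp
  have "esum E (length (ys @ xs) div 2) (sum_list (map sg (ys @ xs)))"
    by (rule walk_even_esum[OF wyx ev])
  then have P: "esum E k (sum_list (map sg (ys @ xs)))" by (simp only: len) simp
  have vw: "{v, w} \<in> E" "v \<noteq> w" using a by (auto simp: adj_def)
  have "esum E (Suc k) (sum_list (map sg (ys @ xs)) + sg v + sg w)"
    by (rule esum.esumS[OF P vw])
  moreover have "sg v + evec (set vs) = sum_list (map sg (ys @ xs)) + sg v + sg w"
    unfolding evec_set_list[OF d] unfolding vs by (simp add: add_ac)
  ultimately show ?thesis by (simp add: lev_esum)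
qed

lemma cyc_self:
  assumes d: "distinct vs" and wv: "walkl E vs" "adj E (last vs) (hd vs)"
    and L: "length vs = 2 * k + 1" and w: "w \<in> set vs"
  shows "lev E (k + 1) (sg w + evec (set vs))"
proof -
  obtain z where z: "z \<in> set vs" "adj E w z" using cyc_nbr[OF wv w] by blast
  show ?thesis by (rule cyc_adj[OF d wv L z(1) z(2)])
qed

fun es :: "nat list \<Rightarrow> (nat \<Rightarrow>\<^sub>0 nat)" where
  "es [] = 0"
| "es [x] = 0"
| "es (x # y # r) = sg x + sg y + es (y # r)"

fun eset :: "nat list \<Rightarrow> nat set set" where
  "eset [] = {}"
| "eset [x] = {}"
| "eset (x # y # r) = insert {x, y} (eset (y # r))"

lemma eset_sub: "e \<in> eset xs \<Longrightarrow> e \<subseteq> set xs"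
  by (induction xs rule: eset.induct) auto

lemma finite_eset: "finite (eset xs)"
  by (induction xs rule: eset.induct) auto

lemma es_eset: "distinct xs \<Longrightarrow> es xs = sum evec (eset xs) \<and> card (eset xs) = length xs - 1"
proof (induction xs rule: eset.induct)
  case (3 x y r)
  have nin: "{x, y} \<notin> eset (y # r)" using eset_sub[of "{x, y}" "y # r"] "3.prems" by auto
  have xy: "x \<noteq> y" using "3.prems" by auto
  show ?case using "3.IH" "3.prems" nin xy finite_eset[of "y # r"]
    by (simp add: evec_pair add_ac)
qed auto

lemma eset_nth: "e \<in> eset xs \<longleftrightarrow> (\<exists>b. Suc b < length xs \<and> e = {xs ! b, xs ! Suc b})"
proof (induction xs rule: eset.induct)
  case (3 x y r)
  show ?case
  proof
    assume "e \<in> eset (x # y # r)"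
    then consider "e = {x, y}" | "e \<in> eset (y # r)" by auto
    then show "\<exists>b. Suc b < length (x # y # r) \<and> e = {(x # y # r) ! b, (x # y # r) ! Suc b}"
    proof cases
      case 1
      then show ?thesis by (intro exI[of _ 0]) auto
    next
      case 2
      then obtain b where "Suc b < length (y # r)" "e = {(y # r) ! b, (y # r) ! Suc b}"
        using "3.IH" by blast
      then show ?thesis by (intro exI[of _ "Suc b"]) auto
    qed
  next
    assume "\<exists>b. Suc b < length (x # y # r) \<and> e = {(x # y # r) ! b, (x # y # r) ! Suc b}"
    then obtain b where b: "Suc b < length (x # y # r)" "e = {(x # y # r) ! b, (x # y # r) ! Suc b}" by blast
    show "e \<in> eset (x # y # r)"
    proof (cases b)
      case 0
      then show ?thesis using b by simp
    next
      case (Suc b')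
      then have "e \<in> eset (y # r)" using "3.IH" b by auto
      then show ?thesis by simp
    qed
  qed
qed auto

lemma es_Cons: "q \<noteq> [] \<Longrightarrow> es (w # q) = sg w + sg (hd q) + es q"
  by (cases q) auto

lemma AB:
  assumes d: "distinct vs" and wv: "walkl E vs" "adj E (last vs) (hd vs)"
    and L: "length vs = 2 * k + 1"
  shows "walkl E q \<Longrightarrow> q \<noteq> [] \<Longrightarrow> last q \<in> set vs \<Longrightarrow>
    lev E (length q + k) (sg (hd q) + es q + evec (set vs)) \<and>
    (\<forall>v. adj E v (hd q) \<longrightarrow> lev E (length q + k) (sg v + es q + evec (set vs)))"
proof (induction q)
  case Nil
  then show ?case by simp
next
  case (Cons w q)
  show ?case
  proof (cases "q = []")
    case True
    then have w: "w \<in> set vs" using Cons.prems by simp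
    show ?thesis using True cyc_self[OF d wv L w] cyc_adj[OF d wv L w] by simp
  next
    case False
    have wq: "walkl E q" and awq: "adj E w (hd q)" using Cons.prems False by (auto simp: walkl_Cons)
    have IH: "lev E (length q + k) (sg (hd q) + es q + evec (set vs))"
      "\<And>v. adj E v (hd q) \<Longrightarrow> lev E (length q + k) (sg v + es q + evec (set vs))"
      using Cons.IH[OF wq False] Cons.prems False by auto
    have e1: "lev E 1 (sg w + sg (hd q))"
      using awq unfolding adj_def by (intro lev_esum esum_edge) auto
    have A: "lev E (length (w # q) + k) (sg (hd (w # q)) + es (w # q) + evec (set vs))"
      using lev_add[OF e1 IH(2)[OF awq]] False by (simp add: es_Cons add_ac)
    have B: "lev E (length (w # q) + k) (sg v + es (w # q) + evec (set vs))" if v: "adj E v w" for v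
    proof -
      have e2: "lev E 1 (sg v + sg w)"
        using v unfolding adj_def by (intro lev_esum esum_edge) auto
      show ?thesis using lev_add[OF e2 IH(1)] False by (simp add: es_Cons add_ac)
    qed
    show ?thesis using A B by simp
  qed
qed



lemma finite_nbrs:
  assumes "simple_graph n E" "H \<subseteq> E"
  shows "finite {z. adj H y z}"
proof -
  have "{z. adj H y z} \<subseteq> {1..n}"
  proof
    fix z assume "z \<in> {z. adj H y z}"
    then have "{y, z} \<in> E" using assms(2) by (auto simp: adj_def)
    then have "{y, z} \<subseteq> {1..n}" using assms(1) by (auto simp: simple_graph_def)
    then show "z \<in> {1..n}" by blast
  qed
  then show ?thesis by (rule finite_subset) simp
qed

lemma deg_ne1:
  assumes "finite {z. adj H y z}" "adj H y z1" "adj H y z2" "z1 \<noteq> z2"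
  shows "degree H y \<noteq> 1"
proof -
  have "card {z1, z2} \<le> card {z. adj H y z}"
    using assms by (intro card_mono) auto
  then show ?thesis using assms(4) by (simp add: degree_def)
qed

lemma tailS:
  assumes sgE: "simple_graph n E" and HE: "H \<subseteq> E" and Cv: "C = cedges vs"
    and cw: "walkl H vs" "adj H (last vs) (hd vs)"
    and pw: "walkl H (j # q)" and pd: "distinct (j # q)" and pl: "last (j # q) \<in> set vs"
    and pn: "\<forall>a < length (j # q) - 1. (j # q) ! a \<notin> set vs"
    and e: "e \<in> eset q"
  shows "e \<in> Estar H C"
proof -
  define p where "p = j # q"
  obtain b where b: "Suc b < length q" "e = {q ! b, q ! Suc b}" using e eset_nth by blast
  have eb: "e = {p ! Suc b, p ! Suc (Suc b)}" using b by (simp add: p_def)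
  have len: "Suc (Suc b) < length p" using b by (simp add: p_def)
  have pw': "walkl H p" and pd': "distinct p" using pw pd by (simp_all add: p_def)
  have adj1: "adj H (p ! Suc b) (p ! Suc (Suc b))" using walkl_nth[OF pw' len] .
  have adj0: "adj H (p ! Suc b) (p ! b)" using walkl_nth[OF pw', of b] len by (auto intro: adj_sym)
  have fin: "\<And>y. finite {z. adj H y z}" using finite_nbrs[OF sgE HE] .
  have notv: "p ! Suc b \<notin> set vs" using pn[rule_format, of "Suc b"] len by (simp add: p_def)
  have eH: "e \<in> H" using adj1 eb by (simp add: adj_def)
  have eC: "e \<notin> C"
  proof
    assume "e \<in> C"
    then have "e \<subseteq> set vs" using cedges_sub Cv by blast
    then show False using notv eb by auto
  qed
  have d1: "degree H (p ! Suc b) \<noteq> 1"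
  proof (rule deg_ne1[OF fin adj0 adj1])
    show "p ! b \<noteq> p ! Suc (Suc b)" using pd' len nth_eq_iff_index_eq[OF pd', of b "Suc (Suc b)"] by auto
  qed
  have d2: "degree H (p ! Suc (Suc b)) \<noteq> 1"
  proof (cases "Suc (Suc (Suc b)) < length p")
    case True
    have a2: "adj H (p ! Suc (Suc b)) (p ! Suc (Suc (Suc b)))" using walkl_nth[OF pw' True] .
    show ?thesis
    proof (rule deg_ne1[OF fin adj_sym[OF adj1] a2])
      show "p ! Suc b \<noteq> p ! Suc (Suc (Suc b))"
        using True nth_eq_iff_index_eq[OF pd', of "Suc b" "Suc (Suc (Suc b))"] by auto
    qed
  next
    case False
    then have "Suc (Suc b) = length p - 1" using len by simp
    moreover have "p \<noteq> []" by (simp add: p_def)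
    ultimately have "p ! Suc (Suc b) = last p" by (simp add: last_conv_nth)
    then have inv: "p ! Suc (Suc b) \<in> set vs" using pl by (simp add: p_def)
    obtain z where z: "z \<in> set vs" "adj H (p ! Suc (Suc b)) z" using cyc_nbr[OF cw inv] by blast
    show ?thesis
    proof (rule deg_ne1[OF fin adj_sym[OF adj1] z(2)])
      show "p ! Suc b \<noteq> z" using z(1) notv by auto
    qed
  qed
  have "\<not> leaf_edge H e" using d1 d2 eb by (auto simp: leaf_edge_def)
  then show ?thesis using eH eC by (simp add: Estar_def)
qed

lemma lev_cong: "lev E a x \<Longrightarrow> a = b \<Longrightarrow> x = y \<Longrightarrow> lev E b y"
  by simp

lemma socle:
  assumes sgE: "simple_graph n E" and su: "spanning_unicyclic_nonbip n E H C" and t: "dH H C \<le> t"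
  shows "1 \<le> n \<and> (\<exists>m. mdeg m < 2 * t \<and> Poly_Mapping.keys m \<subseteq> {1..n} \<and> (\<forall>j\<in>{1..n}. lev E t (sg j + m)))"
proof -
  have HE: "H \<subseteq> E" and con: "connected_graph n H" and cyc: "is_cycle_in H C" and oddC: "odd (card C)"
    using su by (auto simp: spanning_unicyclic_nonbip_def)
  obtain vs where d: "distinct vs" and L3: "3 \<le> length vs" and Cv: "C = cedges vs" and CH: "C \<subseteq> H"
    using cyc unfolding is_cycle_in_def cedges_def by blast
  have cardC: "card C = length vs" using card_cedges[OF d L3] Cv by simp
  define k where "k = (card C - 1) div 2"
  have Ck: "card C = 2 * k + 1" unfolding k_def using oddC by presburger
  have Lk: "length vs = 2 * k + 1" using Ck cardC by simp
  have cwH: "walkl H vs" "adj H (last vs) (hd vs)" using cedges_cwalk[OF d L3] CH Cv by auto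
  have cwE: "walkl E vs" "adj E (last vs) (hd vs)" using cedges_cwalk[OF d L3] CH Cv HE by auto
  have Eb: "\<And>e. e \<in> E \<Longrightarrow> e \<subseteq> {1..n} \<and> card e = 2" using sgE by (auto simp: simple_graph_def)
  have finE: "finite E"
  proof (rule finite_subset)
    show "E \<subseteq> Pow {1..n}" using Eb by auto
  qed simp
  have finH: "finite H" using finE HE by (rule rev_finite_subset)
  have vsn: "set vs \<subseteq> {1..n}"
  proof
    fix x assume x: "x \<in> set vs"
    obtain z where "adj E x z" using cyc_nbr[OF cwE x] by blast
    then have "{x, z} \<in> E" by (simp add: adj_def)
    then have "{x, z} \<subseteq> {1..n}" using Eb by blast
    then show "x \<in> {1..n}" by blast
  qed
  have n1: "1 \<le> n" using vsn L3 by (cases vs) auto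
  define S where "S = Estar H C"
  have SH: "S \<subseteq> H" by (auto simp: S_def Estar_def)
  have finS: "finite S" using finH SH by (rule rev_finite_subset)
  have SE: "\<And>e. e \<in> S \<Longrightarrow> e \<in> E \<and> card e = 2 \<and> e \<subseteq> {1..n}" using SH HE Eb by blast
  have Sesum: "\<And>e. e \<in> S \<Longrightarrow> esum E 1 (evec e)" using SE esum_evec by blast
  define s where "s = t - dH H C"
  define e0 where "e0 = {vs ! 0, vs ! 1}"
  have "(0 + 1) mod length vs = 1" using L3 by simp
  moreover have "vs \<noteq> []" using L3 by auto
  ultimately have e0C: "e0 \<in> C" using cedges_in[of 0 vs] L3 Cv by (simp add: e0_def)
  have e0E: "e0 \<in> E" "card e0 = 2" "e0 \<subseteq> {1..n}" using e0C CH HE Eb by blast+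
  define cyc where "cyc = evec (set vs)"
  define X where "X = (\<Sum>i<s. evec e0)"
  define m where "m = cyc + sum evec S + X"
  have fin2: "\<And>e. e \<in> S \<Longrightarrow> finite e" using SE by (metis card.infinite zero_neq_numeral)
  have md1: "mdeg cyc = length vs" by (simp add: cyc_def mdeg_evec distinct_card[OF d])
  have "mdeg (sum evec S) = (\<Sum>e\<in>S. mdeg (evec e))" by (simp add: mdeg_sum)
  also have "\<dots> = (\<Sum>e\<in>S. 2)"
    by (rule sum.cong) (simp_all add: mdeg_evec fin2 SE)
  finally have md2: "mdeg (sum evec S) = 2 * card S" by simp
  have fe0: "finite e0" by (simp add: e0_def)
  have md3: "mdeg X = 2 * s" unfolding X_def mdeg_sum by (simp add: mdeg_evec fe0 e0E)
  have dHv: "dH H C = card S + k + 1" by (simp add: dH_def S_def k_def)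
  have mdeg: "mdeg m < 2 * t"
    using md1 md2 md3 Lk dHv t unfolding m_def s_def by (simp add: mdeg_add)
  have keys: "Poly_Mapping.keys m \<subseteq> {1..n}"
  proof -
    have "Poly_Mapping.keys cyc \<subseteq> {1..n}" using vsn by (simp add: cyc_def keys_evec)
    moreover have "Poly_Mapping.keys (sum evec S) \<subseteq> {1..n}"
      using SE fin2 by (auto simp: keys_sum_nat[OF finS] keys_evec)
    moreover have "Poly_Mapping.keys X \<subseteq> {1..n}"
      unfolding X_def keys_sum_nat[OF finite_lessThan] using e0E fe0 by (auto simp: keys_evec)
    ultimately show ?thesis by (simp add: m_def keys_add_nat)
  qed
  have esX: "esum E s X" unfolding X_def by (rule esum_rep, rule esum_evec[OF e0E(1,2)])
  have main: "lev E t (sg j + m)" if j: "j \<in> {1..n}" for j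
  proof -
    have v0: "vs ! 0 \<in> set vs" using L3 by (intro nth_mem) auto
    then have "(adj H)\<^sup>*\<^sup>* j (vs ! 0)" using con j vsn unfolding connected_graph_def by blast
    then obtain p0 where "walkl H p0" "p0 \<noteq> []" "hd p0 = j" "last p0 = vs ! 0"
      using rtranclp_walk by blast
    then obtain p where pw: "walkl H p" and pne: "p \<noteq> []" and ph: "hd p = j" and pl: "last p \<in> set vs"
      and pd: "distinct p" and pn: "\<forall>a < length p - 1. p ! a \<notin> set vs"
      using short_path[of H p0 j "set vs"] v0 by metis
    obtain q where pq: "p = j # q" using pne ph by (cases p) auto
    have R: "\<exists>r. distinct r \<and> r \<noteq> [] \<and> eset r \<subseteq> S \<and> lev E (length r + k) (sg j + es r + cyc)"
    proof (cases "q = []")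
      case True
      then have "j \<in> set vs" using pl pq by simp
      then have "lev E (k + 1) (sg j + cyc)" using cyc_self[OF d cwE Lk] by (simp add: cyc_def)
      then show ?thesis by (intro exI[of _ "[j]"]) (simp add: add.commute)
    next
      case False
      have tail: "eset q \<subseteq> S"
        using tailS[OF sgE HE Cv cwH, of j q] pw pd pl pn unfolding pq S_def by blast
      have pwE: "walkl E p" using walkl_mono[OF pw HE] .
      show ?thesis
      proof (cases "{j, hd q} \<in> S")
        case True
        have "eset p = insert {j, hd q} (eset q)" using False unfolding pq by (cases q) auto
        then have "eset p \<subseteq> S" using tail True by simp
        moreover have "lev E (length p + k) (sg j + es p + cyc)"
          using AB[OF d cwE Lk, of p] pwE pne pl ph by (simp add: cyc_def)
        ultimately show ?thesis using pd pne by blast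
      next
        case False': False
        have qwE: "walkl E q" and ajq: "adj E j (hd q)" using pwE False unfolding pq by (auto simp: walkl_Cons)
        have "last q \<in> set vs" using pl False unfolding pq by simp
        then have "lev E (length q + k) (sg j + es q + cyc)"
          using AB[OF d cwE Lk, of q] qwE False ajq by (simp add: cyc_def)
        moreover have "distinct q" using pd pq by simp
        ultimately show ?thesis using tail False by blast
      qed
    qed
    then obtain r where rd: "distinct r" and rne: "r \<noteq> []" and rS: "eset r \<subseteq> S"
      and rl: "lev E (length r + k) (sg j + es r + cyc)" by blast
    have er: "es r = sum evec (eset r)" and cr: "card (eset r) = length r - 1" using es_eset[OF rd] by auto
    have split: "sum evec S = sum evec (S - eset r) + sum evec (eset r)"
      using sum.subset_diff[OF rS finS] by simp
    have esR: "esum E (card (S - eset r)) (sum evec (S - eset r))"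
      using finS Sesum by (intro esum_sum) auto
    have cd: "card (S - eset r) = card S - (length r - 1)"
      using card_Diff_subset[OF finite_eset rS] cr by simp
    have cle: "length r - 1 \<le> card S" using card_mono[OF finS rS] cr by simp
    have r1: "1 \<le> length r" using rne by (cases r) auto
    have "lev E ((length r + k) + card (S - eset r) + s) ((sg j + es r + cyc) + sum evec (S - eset r) + X)"
      by (intro lev_add rl lev_esum esR esX)
    then show ?thesis
    proof (rule lev_cong)
      show "length r + k + card (S - eset r) + s = t" using cd cle r1 dHv t s_def by simp
      show "sg j + es r + cyc + sum evec (S - eset r) + X = sg j + m"
        unfolding m_def split er by (simp add: add_ac)
    qed
  qed
  show ?thesis using n1 mdeg keys main by blast
qed

lemma depth_stable:
  assumes sgE: "simple_graph n E" and su: "spanning_unicyclic_nonbip n E H C" and t: "dH H C \<le> t"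
  shows "depth n (ideal_pow n (edge_ideal n E :: ('k::field) mpoly set) t) = 1"
proof -
  obtain m where n1: "1 \<le> n" and md: "mdeg m < 2 * t" and k: "Poly_Mapping.keys m \<subseteq> {1..n}"
    and l: "\<forall>j\<in>{1..n}. lev E t (sg j + m)"
    using socle[OF sgE su t] by blast
  have notin: "(mono1 m :: 'k mpoly) \<notin> ideal_pow n (edge_ideal n E) t" by (rule mono1_notin[OF md])
  have "\<forall>j\<in>{1..n}. Var j * (mono1 m :: 'k mpoly) \<in> ideal_pow n (edge_ideal n E) t"
  proof
    fix j assume j: "j \<in> {1..n}"
    have "Var j * (mono1 m :: 'k mpoly) = mono1 (sg j + m)" by (simp add: Var_mono1 mono1_mult)
    moreover have "Poly_Mapping.keys (sg j + m) \<subseteq> {1..n}" using j k by (simp add: keys_add_nat)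
    ultimately show "Var j * (mono1 m :: 'k mpoly) \<in> ideal_pow n (edge_ideal n E) t"
      using lev_in_pow l j by metis
  qed
  then show ?thesis by (rule depth_one[OF idl_pow notin _ n1])
qed



section \<open>Neighbours on a cycle\<close>

lemma two_nbrs:
  assumes d: "distinct ws" and L: "3 \<le> length ws" and w: "walkl H ws" "adj H (last ws) (hd ws)"
    and x: "x \<in> set ws"
  shows "\<exists>z1 z2. z1 \<noteq> z2 \<and> adj H x z1 \<and> adj H x z2"
proof -
  obtain i where i: "i < length ws" "x = ws ! i" using x by (auto simp: in_set_conv_nth)
  have ne: "ws \<noteq> []" using L by auto
  have lastw: "last ws = ws ! (length ws - 1)" using last_conv_nth[OF ne] .
  have hdw: "hd ws = ws ! 0" using hd_conv_nth[OF ne] .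
  define pi where "pi = (if i = 0 then length ws - 1 else i - 1)"
  define si where "si = (if Suc i < length ws then Suc i else 0)"
  have pl: "pi < length ws" and sl: "si < length ws" using i L by (auto simp: pi_def si_def)
  have ps: "pi \<noteq> si" using i L by (auto simp: pi_def si_def)
  have a1: "adj H x (ws ! si)"
  proof (cases "Suc i < length ws")
    case True
    then show ?thesis using walkl_nth[OF w(1) True] i by (simp add: si_def)
  next
    case False
    then have "i = length ws - 1" using i by simp
    then show ?thesis using w(2) i lastw hdw False by (simp add: si_def)
  qed
  have a2: "adj H x (ws ! pi)"
  proof (cases "i = 0")
    case True
    then show ?thesis using adj_sym[OF w(2)] i lastw hdw by (simp add: pi_def)
  next
    case False
    then have "Suc (i - 1) < length ws" using i by simp
    from walkl_nth[OF w(1) this] False i show ?thesis by (auto simp: pi_def intro: adj_sym)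
  qed
  have "ws ! pi \<noteq> ws ! si" using nth_eq_iff_index_eq[OF d pl sl] ps by simp
  then show ?thesis using a1 a2 by blast
qed

lemma succ_mod_inj:
  assumes "i < (L::nat)" "i' < L" "(i + 1) mod L = (i' + 1) mod L"
  shows "i = i'"
proof -
  have a: "(i + 1) mod L = (if i + 1 = L then 0 else i + 1)" using succ_mod[OF assms(1)] .
  have b: "(i' + 1) mod L = (if i' + 1 = L then 0 else i' + 1)" using succ_mod[OF assms(2)] .
  show ?thesis
  proof (cases "i + 1 = L")
    case True
    then have "(i' + 1) mod L = 0" using a assms(3) by simp
    then have "i' + 1 = L" using b by (cases "i' + 1 = L") auto
    then show ?thesis using True by simp
  next
    case False
    then have "(i' + 1) mod L = i + 1" using a assms(3) by simp
    then show ?thesis using b by (cases "i' + 1 = L") auto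
  qed
qed

lemma cyc_nbrs_card:
  assumes d: "distinct vs" and L: "3 \<le> length vs"
  shows "card {z. adj (cedges vs) x z} \<le> 2" "finite {z. adj (cedges vs) x z}"
proof -
  let ?L = "length vs"
  define A where "A = {vs ! ((j + 1) mod ?L) | j. j < ?L \<and> x = vs ! j}"
  define B where "B = {vs ! i | i. i < ?L \<and> x = vs ! ((i + 1) mod ?L)}"
  have sub: "{z. adj (cedges vs) x z} \<subseteq> A \<union> B"
  proof
    fix z assume "z \<in> {z. adj (cedges vs) x z}"
    then have "{x, z} \<in> cedges vs" by (simp add: adj_def)
    then obtain i where i: "i < ?L" "{x, z} = {vs ! i, vs ! ((i + 1) mod ?L)}"
      unfolding cedges_def by blast
    then have "(x = vs ! i \<and> z = vs ! ((i + 1) mod ?L)) \<or> (x = vs ! ((i + 1) mod ?L) \<and> z = vs ! i)"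
      by (simp add: doubleton_eq_iff)
    then show "z \<in> A \<union> B"
    proof
      assume "x = vs ! i \<and> z = vs ! ((i + 1) mod ?L)"
      then have "z \<in> A" unfolding A_def using i(1) by blast
      then show ?thesis by simp
    next
      assume "x = vs ! ((i + 1) mod ?L) \<and> z = vs ! i"
      then have "z \<in> B" unfolding B_def using i(1) by blast
      then show ?thesis by simp
    qed
  qed
  have "A \<subseteq> (\<lambda>j. vs ! ((j + 1) mod ?L)) ` {..<?L}" unfolding A_def by blast
  moreover have "B \<subseteq> (\<lambda>j. vs ! j) ` {..<?L}" unfolding B_def by blast
  ultimately have finAB: "finite A" "finite B" by (auto intro: finite_subset)
  have cA: "card A \<le> 1"
  proof -
    have "\<forall>a\<in>A. \<forall>b\<in>A. a = b"
    proof (intro ballI)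
      fix a b assume "a \<in> A" "b \<in> A"
      then obtain j j' where j: "j < ?L" "x = vs ! j" "a = vs ! ((j + 1) mod ?L)"
        and j': "j' < ?L" "x = vs ! j'" "b = vs ! ((j' + 1) mod ?L)" unfolding A_def by blast
      have "j = j'" using nth_eq_iff_index_eq[OF d j(1) j'(1)] j(2) j'(2) by simp
      then show "a = b" using j(3) j'(3) by simp
    qed
    then show ?thesis using card_le_Suc0_iff_eq[OF finAB(1)] by simp
  qed
  have cB: "card B \<le> 1"
  proof -
    have "\<forall>a\<in>B. \<forall>b\<in>B. a = b"
    proof (intro ballI)
      fix a b assume "a \<in> B" "b \<in> B"
      then obtain i i' where i: "i < ?L" "x = vs ! ((i + 1) mod ?L)" "a = vs ! i"
        and i': "i' < ?L" "x = vs ! ((i' + 1) mod ?L)" "b = vs ! i'" unfolding B_def by blast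
      have m1: "(i + 1) mod ?L < ?L" and m2: "(i' + 1) mod ?L < ?L" using mod_lt3[OF L] by auto
      have "vs ! ((i + 1) mod ?L) = vs ! ((i' + 1) mod ?L)" by (rule trans[OF sym[OF i(2)] i'(2)])
      then have "(i + 1) mod ?L = (i' + 1) mod ?L"
        using nth_eq_iff_index_eq[OF d m1 m2] by blast
      then have "i = i'" by (rule succ_mod_inj[OF i(1) i'(1)])
      then show "a = b" using i(3) i'(3) by simp
    qed
    then show ?thesis using card_le_Suc0_iff_eq[OF finAB(2)] by simp
  qed
  show "finite {z. adj (cedges vs) x z}" using finite_subset[OF sub] finAB by blast
  have "card {z. adj (cedges vs) x z} \<le> card (A \<union> B)" using sub finAB by (intro card_mono) auto
  also have "\<dots> \<le> card A + card B" by (rule card_Un_le)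
  finally show "card {z. adj (cedges vs) x z} \<le> 2" using cA cB by simp
qed



lemma cycle_in_cycle:
  assumes dv: "distinct vs" and Lv: "3 \<le> length vs" and dw: "distinct ws" and Lw: "3 \<le> length ws"
    and sub: "cedges ws \<subseteq> cedges vs"
  shows "cedges ws = cedges vs"
proof -
  have cw1: "walkl (cedges ws) ws" "adj (cedges ws) (last ws) (hd ws)"
    using cedges_cwalk[OF dw Lw] by auto
  have cw0: "walkl (cedges vs) vs" "adj (cedges vs) (last vs) (hd vs)"
    using cedges_cwalk[OF dv Lv] by auto
  have nb_eq: "{z. adj (cedges ws) x z} = {z. adj (cedges vs) x z}" if x: "x \<in> set ws" for x
  proof -
    have ss: "{z. adj (cedges ws) x z} \<subseteq> {z. adj (cedges vs) x z}"
      using sub by (auto simp: adj_def)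
    have f0: "finite {z. adj (cedges vs) x z}" and c0: "card {z. adj (cedges vs) x z} \<le> 2"
      using cyc_nbrs_card[OF dv Lv] by auto
    have f1: "finite {z. adj (cedges ws) x z}" using finite_subset[OF ss f0] .
    obtain z1 z2 where z: "z1 \<noteq> z2" "adj (cedges ws) x z1" "adj (cedges ws) x z2"
      using two_nbrs[OF dw Lw cw1 x] by blast
    have "card {z1, z2} \<le> card {z. adj (cedges ws) x z}"
      using z f1 by (intro card_mono) auto
    then have "2 \<le> card {z. adj (cedges ws) x z}" using z(1) by simp
    then have "card {z. adj (cedges ws) x z} = card {z. adj (cedges vs) x z}"
      using card_mono[OF f0 ss] c0 by simp
    then show ?thesis using card_subset_eq[OF f0 ss] by simp
  qed
  have closed: "z \<in> set ws" if "x \<in> set ws" "adj (cedges vs) x z" for x z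
  proof -
    have "adj (cedges ws) x z" using nb_eq[OF that(1)] that(2) by blast
    then have "{x, z} \<in> cedges ws" by (simp add: adj_def)
    then show ?thesis using cedges_sub by blast
  qed
  have w0: "ws ! 0 \<in> set ws" using Lw by (intro nth_mem) auto
  obtain z where "adj (cedges ws) (ws ! 0) z" using cyc_nbr[OF cw1 w0] by blast
  then have "{ws ! 0, z} \<in> cedges vs" using sub by (auto simp: adj_def)
  then have "ws ! 0 \<in> set vs" using cedges_sub by blast
  then obtain i0 where i0: "i0 < length vs" "vs ! i0 \<in> set ws"
    using w0 by (metis in_set_conv_nth)
  have down: "vs ! (i0 - d) \<in> set ws" if "d \<le> i0" for d
    using that
  proof (induction d)
    case 0
    then show ?case using i0 by simp
  next
    case (Suc d)
    then have a: "vs ! (i0 - d) \<in> set ws" by simp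
    have s: "Suc (i0 - Suc d) < length vs" "Suc (i0 - Suc d) = i0 - d" using Suc.prems i0 by auto
    have "adj (cedges vs) (vs ! (i0 - Suc d)) (vs ! (i0 - d))"
      using walkl_nth[OF cw0(1) s(1)] s(2) by simp
    then show ?case using closed[OF a] adj_sym by blast
  qed
  have up: "vs ! j \<in> set ws" if "j < length vs" for j
    using that
  proof (induction j)
    case 0
    then show ?case using down[of i0] by simp
  next
    case (Suc j)
    then have a: "vs ! j \<in> set ws" by simp
    have "adj (cedges vs) (vs ! j) (vs ! Suc j)" using walkl_nth[OF cw0(1) Suc.prems] .
    then show ?case using closed[OF a] by blast
  qed
  have "cedges vs \<subseteq> cedges ws"
  proof
    fix e assume "e \<in> cedges vs"
    then obtain i where i: "i < length vs" "e = {vs ! i, vs ! ((i + 1) mod length vs)}"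
      unfolding cedges_def by blast
    have "adj (cedges vs) (vs ! i) (vs ! ((i + 1) mod length vs))"
      using cedges_in[OF i(1)] cyc_next_neq[OF dv _ i(1)] Lv by (simp add: adj_def)
    then have "adj (cedges ws) (vs ! i) (vs ! ((i + 1) mod length vs))"
      using nb_eq[OF up[OF i(1)]] by blast
    then show "e \<in> cedges ws" using i(2) by (simp add: adj_def)
  qed
  then show ?thesis using sub by blast
qed

lemma rtranclp_adj_sym: "(adj H)\<^sup>*\<^sup>* x y \<Longrightarrow> (adj H)\<^sup>*\<^sup>* y x"
proof (induction rule: rtranclp_induct)
  case base
  then show ?case by simp
next
  case (step y z)
  then show ?case using adj_sym by (metis converse_rtranclp_into_rtranclp)
qed

lemma walk_rtranclp: "walkl H xs \<Longrightarrow> xs \<noteq> [] \<Longrightarrow> (adj H)\<^sup>*\<^sup>* (hd xs) (last xs)"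
proof (induction xs)
  case Nil
  then show ?case by simp
next
  case (Cons x xs)
  show ?case
  proof (cases "xs = []")
    case True
    then show ?thesis by simp
  next
    case False
    then have "adj H x (hd xs)" "walkl H xs" using Cons.prems by (auto simp: walkl_Cons)
    then show ?thesis using Cons.IH False by (auto intro: converse_rtranclp_into_rtranclp)
  qed
qed

lemma rtranclp_adj_mono: "(adj H)\<^sup>*\<^sup>* x y \<Longrightarrow> H \<subseteq> H' \<Longrightarrow> (adj H')\<^sup>*\<^sup>* x y"
proof (induction rule: rtranclp_induct)
  case base
  then show ?case by simp
next
  case (step y z)
  then show ?case by (meson adj_mono rtranclp.rtrancl_into_rtrancl)
qed

lemma cross:
  "walkl E xs \<Longrightarrow> xs \<noteq> [] \<Longrightarrow> hd xs \<notin> S \<Longrightarrow> last xs \<in> S \<Longrightarrow> \<exists>a b. adj E a b \<and> a \<notin> S \<and> b \<in> S"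
proof (induction xs)
  case Nil
  then show ?case by simp
next
  case (Cons x xs)
  show ?case
  proof (cases "xs = []")
    case True
    then show ?thesis using Cons.prems by simp
  next
    case False
    then have a: "adj E x (hd xs)" "walkl E xs" using Cons.prems by (auto simp: walkl_Cons)
    show ?thesis
    proof (cases "hd xs \<in> S")
      case True
      then show ?thesis using a Cons.prems by auto
    next
      case False': False
      then show ?thesis using Cons.IH[OF a(2) False False'] Cons.prems False by simp
    qed
  qed
qed

lemma base_conn:
  assumes d: "distinct vs" and L: "3 \<le> length vs" and x: "x \<in> set vs"
  shows "(adj (cedges vs))\<^sup>*\<^sup>* x (vs ! 0)"
proof -
  obtain i where i: "i < length vs" "x = vs ! i" using x by (auto simp: in_set_conv_nth)
  have w: "walkl (cedges vs) vs" using cedges_cwalk[OF d L] by auto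
  have "vs = take (Suc i) vs @ drop (Suc i) vs" by simp
  then have wt: "walkl (cedges vs) (take (Suc i) vs)" using w by (metis walkl_appendD1)
  have ne: "take (Suc i) vs \<noteq> []" using i by (cases vs) auto
  have "hd (take (Suc i) vs) = vs ! 0" using i by (cases vs) auto
  moreover have "last (take (Suc i) vs) = vs ! i" using i by (simp add: take_Suc_conv_app_nth)
  ultimately have "(adj (cedges vs))\<^sup>*\<^sup>* (vs ! 0) x" using walk_rtranclp[OF wt ne] i by simp
  then show ?thesis by (rule rtranclp_adj_sym)
qed

definition Qext :: "nat \<Rightarrow> nat set set \<Rightarrow> nat list \<Rightarrow> nat set \<Rightarrow> nat set set \<Rightarrow> bool" where
  "Qext n E vs S H \<longleftrightarrow> set vs \<subseteq> S \<and> S \<subseteq> {1..n} \<and> cedges vs \<subseteq> H \<and> H \<subseteq> E \<and>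
     (\<forall>e\<in>H. e \<subseteq> S) \<and> (\<forall>x\<in>S. (adj H)\<^sup>*\<^sup>* x (vs ! 0)) \<and>
     (\<forall>C'. is_cycle_in H C' \<longrightarrow> C' = cedges vs)"

lemma Qext_step:
  assumes Q: "Qext n E vs S H" and v: "v \<notin> S" "v \<in> {1..n}" and p: "p \<in> S" and vp: "adj E v p"
  shows "Qext n E vs (insert v S) (insert {v, p} H)"
proof -
  let ?H = "insert {v, p} H"
  have HS: "\<forall>e\<in>H. e \<subseteq> S" and uniq: "\<forall>C'. is_cycle_in H C' \<longrightarrow> C' = cedges vs"
    and conn: "\<forall>x\<in>S. (adj H)\<^sup>*\<^sup>* x (vs ! 0)" using Q by (auto simp: Qext_def)
  have nb: "z = p" if "adj ?H v z" for z
  proof -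
    have "{v, z} \<in> ?H" "v \<noteq> z" using that by (auto simp: adj_def)
    moreover have "{v, z} \<notin> H" using HS v(1) by blast
    ultimately show ?thesis by (auto simp: doubleton_eq_iff)
  qed
  have uniq': "C' = cedges vs" if cyc: "is_cycle_in ?H C'" for C'
  proof -
    obtain ws where dw: "distinct ws" and Lw: "3 \<le> length ws" and C': "C' = cedges ws"
      and sub: "cedges ws \<subseteq> ?H"
      using cyc unfolding is_cycle_in_def cedges_def by blast
    have cw: "walkl ?H ws" "adj ?H (last ws) (hd ws)" using cedges_cwalk[OF dw Lw sub] by auto
    have vn: "v \<notin> set ws"
    proof
      assume "v \<in> set ws"
      then obtain z1 z2 where "z1 \<noteq> z2" "adj ?H v z1" "adj ?H v z2"
        using two_nbrs[OF dw Lw cw] by blast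
      then show False using nb by blast
    qed
    have "cedges ws \<subseteq> H"
    proof
      fix e assume e: "e \<in> cedges ws"
      then have "e \<subseteq> set ws" by (rule cedges_sub)
      then have "e \<noteq> {v, p}" using vn by blast
      then show "e \<in> H" using sub e by blast
    qed
    then have "is_cycle_in H C'" using dw Lw C' unfolding is_cycle_in_def cedges_def by blast
    then show ?thesis using uniq by blast
  qed
  have conn': "(adj ?H)\<^sup>*\<^sup>* x (vs ! 0)" if x: "x \<in> insert v S" for x
  proof (cases "x = v")
    case True
    have "(adj H)\<^sup>*\<^sup>* p (vs ! 0)" using conn p by blast
    then have "(adj ?H)\<^sup>*\<^sup>* p (vs ! 0)" by (rule rtranclp_adj_mono) auto
    moreover have "adj ?H v p" using vp by (auto simp: adj_def)
    ultimately show ?thesis using True by (auto intro: converse_rtranclp_into_rtranclp)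
  next
    case False
    then have "(adj H)\<^sup>*\<^sup>* x (vs ! 0)" using conn x by blast
    then show ?thesis by (rule rtranclp_adj_mono) auto
  qed
  have "{v, p} \<in> E" using vp by (simp add: adj_def)
  then show ?thesis using Q v p conn' uniq' unfolding Qext_def by auto
qed

lemma exists_from_cycle:
  assumes sgE: "simple_graph n E" and con: "connected_graph n E"
    and d: "distinct vs" and L: "3 \<le> length vs" and CE: "cedges vs \<subseteq> E" and od: "odd (length vs)"
  shows "\<exists>H C. spanning_unicyclic_nonbip n E H C"
proof -
  have Eb: "\<And>e. e \<in> E \<Longrightarrow> e \<subseteq> {1..n}" using sgE by (auto simp: simple_graph_def)
  have cwE: "walkl E vs" "adj E (last vs) (hd vs)" using cedges_cwalk[OF d L CE] by auto
  have vsn: "set vs \<subseteq> {1..n}"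
  proof
    fix x assume x: "x \<in> set vs"
    obtain z where "adj E x z" using cyc_nbr[OF cwE x] by blast
    then have "{x, z} \<in> E" by (simp add: adj_def)
    then have "{x, z} \<subseteq> {1..n}" using Eb by blast
    then show "x \<in> {1..n}" by blast
  qed
  have Q0: "Qext n E vs (set vs) (cedges vs)"
    unfolding Qext_def
  proof (intro conjI)
    show "\<forall>e\<in>cedges vs. e \<subseteq> set vs" using cedges_sub by blast
    show "\<forall>x\<in>set vs. (adj (cedges vs))\<^sup>*\<^sup>* x (vs ! 0)" using base_conn[OF d L] by blast
    show "\<forall>C'. is_cycle_in (cedges vs) C' \<longrightarrow> C' = cedges vs"
    proof (intro allI impI)
      fix C' assume "is_cycle_in (cedges vs) C'"
      then obtain ws where "distinct ws" "3 \<le> length ws" "C' = cedges ws" "cedges ws \<subseteq> cedges vs"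
        unfolding is_cycle_in_def cedges_def by blast
      then show "C' = cedges vs" using cycle_in_cycle[OF d L] by blast
    qed
  qed (use vsn CE in auto)
  define P where "P x \<longleftrightarrow> Qext n E vs (fst x) (snd x)" for x
  have "P (set vs, cedges vs)" using Q0 by (simp add: P_def)
  then obtain x where Px: "P x" and minx: "\<And>y. P y \<Longrightarrow> card ({1..n} - fst x) \<le> card ({1..n} - fst y)"
    using ex_has_least_nat[of P "(set vs, cedges vs)" "\<lambda>x. card ({1..n} - fst x)"] by blast
  obtain S H where x: "x = (S, H)" by (cases x)
  have Q: "Qext n E vs S H" using Px x by (simp add: P_def)
  have Sfull: "S = {1..n}"
  proof (rule ccontr)
    assume "S \<noteq> {1..n}"
    moreover have "S \<subseteq> {1..n}" using Q by (simp add: Qext_def)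
    ultimately obtain y where y: "y \<in> {1..n}" "y \<notin> S" by blast
    have v0: "vs ! 0 \<in> set vs" using L by (intro nth_mem) auto
    then have "(adj E)\<^sup>*\<^sup>* y (vs ! 0)" using con y vsn unfolding connected_graph_def by blast
    then obtain xs where xs: "walkl E xs" "xs \<noteq> []" "hd xs = y" "last xs = vs ! 0"
      using rtranclp_walk by blast
    have "last xs \<in> S" using xs(4) v0 Q by (auto simp: Qext_def)
    then obtain a b where ab: "adj E a b" "a \<notin> S" "b \<in> S"
      using cross[OF xs(1,2)] xs(3) y(2) by blast
    have "{a, b} \<in> E" using ab(1) by (simp add: adj_def)
    then have "{a, b} \<subseteq> {1..n}" using Eb by blast
    then have an: "a \<in> {1..n}" by blast
    have Q': "Qext n E vs (insert a S) (insert {a, b} H)" by (rule Qext_step[OF Q ab(2) an ab(3) ab(1)])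
    then have "card ({1..n} - S) \<le> card ({1..n} - insert a S)"
      using minx[of "(insert a S, insert {a, b} H)"] x by (simp add: P_def)
    moreover have "{1..n} - insert a S = ({1..n} - S) - {a}" by blast
    moreover have "card (({1..n} - S) - {a}) < card ({1..n} - S)"
      using an ab(2) by (intro card_Diff1_less) auto
    ultimately show False by simp
  qed
  have HE: "H \<subseteq> E" and CH: "cedges vs \<subseteq> H" and uniq: "\<forall>C'. is_cycle_in H C' \<longrightarrow> C' = cedges vs"
    and conn: "\<forall>x\<in>{1..n}. (adj H)\<^sup>*\<^sup>* x (vs ! 0)" using Q Sfull by (auto simp: Qext_def)
  have "connected_graph n H"
    unfolding connected_graph_def
  proof (intro ballI)
    fix u v assume "u \<in> {1..n}" "v \<in> {1..n}"
    then have "(adj H)\<^sup>*\<^sup>* u (vs ! 0)" "(adj H)\<^sup>*\<^sup>* (vs ! 0) v"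
      using conn rtranclp_adj_sym by blast+
    then show "(adj H)\<^sup>*\<^sup>* u v" by (rule rtranclp_trans)
  qed
  moreover have "is_cycle_in H (cedges vs)" using d L CH unfolding is_cycle_in_def cedges_def by blast
  moreover have "odd (card (cedges vs))" using card_cedges[OF d L] od by simp
  ultimately have "spanning_unicyclic_nonbip n E H (cedges vs)"
    using HE uniq unfolding spanning_unicyclic_nonbip_def by blast
  then show ?thesis by blast
qed



lemma walk_join:
  assumes "walkl E a" "walkl E b" "a \<noteq> []" "b \<noteq> []" "last a = hd b"
  shows "walkl E (a @ tl b) \<and> hd (a @ tl b) = hd a \<and> last (a @ tl b) = last b \<and>
         length (a @ tl b) = length a + length b - 1"
proof -
  have b: "b = hd b # tl b" using assms(4) by simp
  have "walkl E (hd b # tl b)" using assms(2) b by simp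
  then have "walkl E (tl b)" "tl b \<noteq> [] \<Longrightarrow> adj E (hd b) (hd (tl b))" by (auto simp: walkl_Cons)
  then have w: "walkl E (a @ tl b)" using assms(1,5) by (auto simp: walkl_append)
  have l: "last (a @ tl b) = last b"
  proof (cases "tl b = []")
    case True
    then have "b = [hd b]" using b by simp
    then show ?thesis using True assms(5) by (metis append_Nil2 last.simps)
  next
    case False
    then show ?thesis using b by (metis last_ConsR last_appendR)
  qed
  show ?thesis using w l assms(3,4) by (cases b) auto
qed

lemma odd_closed_walk:
  assumes sgE: "simple_graph n E" and con: "connected_graph n E" and nb: "\<not> bipartite n E"
  shows "\<exists>w. walkl E w \<and> 2 \<le> length w \<and> hd w = last w \<and> even (length w)"
proof (rule ccontr)
  assume nw: "\<not> ?thesis"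
  have Eb: "\<And>e. e \<in> E \<Longrightarrow> e \<subseteq> {1..n}" using sgE by (auto simp: simple_graph_def)
  define c where "c v \<longleftrightarrow> (\<exists>xs. walkl E xs \<and> xs \<noteq> [] \<and> hd xs = 1 \<and> last xs = v \<and> odd (length xs))" for v
  have "adj E u v \<longrightarrow> c u \<noteq> c v" for u v
  proof
    assume uv: "adj E u v"
    have "{u, v} \<in> E" using uv by (simp add: adj_def)
    then have "{u, v} \<subseteq> {1..n}" using Eb by blast
    then have un: "u \<in> {1..n}" and "1 \<in> {1..n}" by auto
    then have "(adj E)\<^sup>*\<^sup>* 1 u" using con unfolding connected_graph_def by blast
    then obtain xs where xs: "walkl E xs" "xs \<noteq> []" "hd xs = 1" "last xs = u"
      using rtranclp_walk by blast
    have xsv: "walkl E (xs @ [v])" using xs uv by (simp add: walkl_append)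
    show "c u \<noteq> c v"
    proof (cases "c u")
      case True
      then obtain xs1 where xs1: "walkl E xs1" "xs1 \<noteq> []" "hd xs1 = 1" "last xs1 = u" "odd (length xs1)"
        unfolding c_def by blast
      have w1: "walkl E (xs1 @ [v])" using xs1 uv by (simp add: walkl_append)
      have "\<not> c v"
      proof
        assume "c v"
        then obtain ys where ys: "walkl E ys" "ys \<noteq> []" "hd ys = 1" "last ys = v" "odd (length ys)"
          unfolding c_def by blast
        have j: "walkl E ((xs1 @ [v]) @ tl (rev ys)) \<and> hd ((xs1 @ [v]) @ tl (rev ys)) = hd (xs1 @ [v]) \<and>
          last ((xs1 @ [v]) @ tl (rev ys)) = last (rev ys) \<and>
          length ((xs1 @ [v]) @ tl (rev ys)) = length (xs1 @ [v]) + length (rev ys) - 1"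
          by (rule walk_join) (use w1 ys walkl_rev[OF ys(1)] in \<open>auto simp: hd_rev\<close>)
        have "hd (xs1 @ [v]) = 1" using xs1 by simp
        moreover have "last (rev ys) = 1" using ys by (simp add: last_rev)
        moreover have "even (length (xs1 @ [v]) + length (rev ys) - 1)" using xs1 ys by simp
        moreover have "2 \<le> length (xs1 @ [v]) + length (rev ys) - 1" using xs1 ys by (cases xs1; cases ys) auto
        ultimately show False using nw j by metis
      qed
      then show ?thesis using True by simp
    next
      case False
      then have "\<not> odd (length xs)" using xs unfolding c_def by blast
      then have "c v" unfolding c_def using xsv xs by (intro exI[of _ "xs @ [v]"]) simp
      then show ?thesis using False by simp
    qed
  qed
  then have "bipartite n E" unfolding bipartite_def by blast
  then show False using nb by simp
qed

lemma min_odd_cycle: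
  assumes w: "walkl E w" "2 \<le> length w" "hd w = last w" "even (length w)"
  shows "\<exists>vs. distinct vs \<and> 3 \<le> length vs \<and> cedges vs \<subseteq> E \<and> odd (length vs)"
proof -
  define P where "P w \<longleftrightarrow> walkl E w \<and> 2 \<le> length w \<and> hd w = last w \<and> even (length w)" for w
  have "P w" using w by (simp add: P_def)
  then obtain w0 where P0: "P w0" and min0: "\<And>w'. P w' \<Longrightarrow> length w0 \<le> length w'"
    using ex_has_least_nat[of P w length] by blast
  have ww: "walkl E w0" and wl: "2 \<le> length w0" and wc: "hd w0 = last w0" and we: "even (length w0)"
    using P0 by (auto simp: P_def)
  have ne: "w0 \<noteq> []" using wl by auto
  define vs where "vs = butlast w0"
  have w0vs: "w0 = vs @ [last w0]" unfolding vs_def using ne by simp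
  have dist: "distinct vs"
  proof (rule ccontr)
    assume "\<not> distinct vs"
    then obtain a x b c where abc: "vs = a @ [x] @ b @ [x] @ c" using not_distinct_decomp by blast
    define z where "z = last w0"
    have w0e: "w0 = a @ [x] @ b @ [x] @ c @ [z]" using w0vs abc z_def by simp
    have hz: "hd w0 = z" using wc z_def by simp
    have "walkl E (a @ (x # b @ [x]) @ (c @ [z]))" using ww w0e by simp
    then have W1: "walkl E (x # b @ [x])" by (metis walkl_appendD1 walkl_appendD2)
    have "walkl E ((a @ [x]) @ (b @ (x # c @ [z])))" using ww w0e by simp
    then have wa: "walkl E (a @ [x])" and "walkl E (b @ (x # c @ [z]))"
      by (metis walkl_appendD1, metis walkl_appendD2)
    then have wxc: "walkl E ((x # c) @ [z])" by (metis walkl_appendD2 append_Cons append_Nil)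
    have "walkl E (x # c) \<and> walkl E [z] \<and> (x # c \<noteq> [] \<longrightarrow> [z] \<noteq> [] \<longrightarrow> adj E (last (x # c)) (hd [z]))"
      using iffD1[OF walkl_append[of E "x # c" "[z]"] wxc] .
    then have wxc1: "walkl E (x # c)" and axz: "adj E (last (x # c)) z" by auto
    have hdz: "hd (a @ [x]) = z" using hz w0e by (cases a) auto
    have "walkl E (x # c) \<and> walkl E (a @ [x]) \<and>
      (x # c \<noteq> [] \<longrightarrow> a @ [x] \<noteq> [] \<longrightarrow> adj E (last (x # c)) (hd (a @ [x])))"
      using wxc1 wa axz hdz by simp
    then have W2: "walkl E ((x # c) @ (a @ [x]))" using walkl_append[of E "x # c" "a @ [x]"] by blast
    have len: "length w0 = length a + length b + length c + 3" using w0e by simp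
    have P1: "even (length (x # b @ [x])) \<Longrightarrow> P (x # b @ [x])" using W1 by (simp add: P_def)
    have P2: "even (length ((x # c) @ (a @ [x]))) \<Longrightarrow> P ((x # c) @ (a @ [x]))" using W2 by (simp add: P_def)
    have "even (length (x # b @ [x])) \<or> even (length ((x # c) @ (a @ [x])))" using len we by auto
    then show False
    proof
      assume "even (length (x # b @ [x]))"
      then show False using min0[OF P1] len by simp
    next
      assume "even (length ((x # c) @ (a @ [x])))"
      then show False using min0[OF P2] len by simp
    qed
  qed
  have lvs: "length vs = length w0 - 1" by (simp add: vs_def)
  have "length w0 \<noteq> 2"
  proof
    assume "length w0 = 2"
    then obtain p q where "w0 = [p, q]" by (auto simp: length_Suc_conv numeral_2_eq_2)
    then show False using ww wc by (auto simp: adj_def)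
  qed
  then have L3: "3 \<le> length vs" using wl we lvs by presburger
  have od: "odd (length vs)" using lvs we wl ne by simp
  have nth: "vs ! i = w0 ! i" if "i < length vs" for i using that by (simp add: vs_def nth_butlast)
  have "cedges vs \<subseteq> E"
  proof
    fix e assume "e \<in> cedges vs"
    then obtain i where i: "i < length vs" "e = {vs ! i, vs ! ((i + 1) mod length vs)}"
      unfolding cedges_def by blast
    show "e \<in> E"
    proof (cases "i + 1 < length vs")
      case True
      then have "adj E (w0 ! i) (w0 ! Suc i)" using walkl_nth[OF ww] lvs by simp
      moreover have "vs ! ((i + 1) mod length vs) = w0 ! Suc i" using True nth by simp
      ultimately show ?thesis using i nth by (simp add: adj_def)
    next
      case False
      then have ii: "i + 1 = length vs" using i by simp
      then have "(i + 1) mod length vs = 0" by simp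
      moreover have "vs ! 0 = w0 ! Suc i"
      proof -
        have vne: "vs \<noteq> []" using L3 by auto
        have "vs ! 0 = hd w0" using nth[of 0] vne ne by (simp add: hd_conv_nth)
        also have "\<dots> = last w0" by (rule wc)
        also have "\<dots> = w0 ! Suc i" using ii lvs ne by (simp add: last_conv_nth)
        finally show ?thesis .
      qed
      moreover have "Suc i < length w0" using ii lvs wl by simp
      then have "adj E (w0 ! i) (w0 ! Suc i)" by (rule walkl_nth[OF ww])
      ultimately show ?thesis using i nth by (simp add: adj_def)
    qed
  qed
  then show ?thesis using dist L3 od by blast
qed

theorem corollary2p8:
  fixes n :: nat and E :: "nat set set"
  assumes "simple_graph n E" and "connected_graph n E" and "\<not> bipartite n E"
  shows "dstab n (edge_ideal n E :: ('k::field) mpoly set)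
           \<le> Min {dH H C | H C. spanning_unicyclic_nonbip n E H C}"
proof -
  obtain w where "walkl E w" "2 \<le> length w" "hd w = last w" "even (length w)"
    using odd_closed_walk[OF assms] by blast
  then obtain vs where "distinct vs" "3 \<le> length vs" "cedges vs \<subseteq> E" "odd (length vs)"
    using min_odd_cycle by blast
  then obtain H0 C0 where su0: "spanning_unicyclic_nonbip n E H0 C0"
    using exists_from_cycle[OF assms(1,2)] by blast
  let ?D = "{dH H C | H C. spanning_unicyclic_nonbip n E H C}"
  have Eb: "\<And>e. e \<in> E \<Longrightarrow> e \<subseteq> {1..n}" using assms(1) by (auto simp: simple_graph_def)
  have finE: "finite E"
  proof (rule finite_subset)
    show "E \<subseteq> Pow {1..n}" using Eb by auto
  qed simp
  have "?D \<subseteq> (\<lambda>(H, C). dH H C) ` (Pow E \<times> Pow E)"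
  proof
    fix x assume "x \<in> ?D"
    then obtain H C where x: "x = dH H C" and su: "spanning_unicyclic_nonbip n E H C" by blast
    have "H \<subseteq> E" "C \<subseteq> H" using su unfolding spanning_unicyclic_nonbip_def is_cycle_in_def by auto
    then show "x \<in> (\<lambda>(H, C). dH H C) ` (Pow E \<times> Pow E)" using x by auto
  qed
  moreover have "finite ((\<lambda>(H, C). dH H C) ` (Pow E \<times> Pow E))" using finE by simp
  ultimately have finD: "finite ?D" by (rule finite_subset)
  have "?D \<noteq> {}" using su0 by blast
  then have "Min ?D \<in> ?D" using finD by (intro Min_in) auto
  then obtain H C where mn: "Min ?D = dH H C" and su: "spanning_unicyclic_nonbip n E H C" by blast
  have "\<forall>i. depth n (ideal_pow n (edge_ideal n E :: 'k mpoly set) (dH H C)) =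
            depth n (ideal_pow n (edge_ideal n E :: 'k mpoly set) (dH H C + i))"
  proof
    fix i
    have a: "depth n (ideal_pow n (edge_ideal n E :: 'k mpoly set) (dH H C)) = 1"
      by (rule depth_stable[OF assms(1) su]) simp
    have b: "depth n (ideal_pow n (edge_ideal n E :: 'k mpoly set) (dH H C + i)) = 1"
      by (rule depth_stable[OF assms(1) su]) simp
    show "depth n (ideal_pow n (edge_ideal n E :: 'k mpoly set) (dH H C)) =
            depth n (ideal_pow n (edge_ideal n E :: 'k mpoly set) (dH H C + i))"
      using a b by simp
  qed
  then have "dstab n (edge_ideal n E :: 'k mpoly set) \<le> dH H C"
    unfolding dstab_def by (rule Least_le)
  then show ?thesis using mn by simp
qed

end
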